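(* For all integers $n_1\ge n_2\ge n_3\ge 2$, $$m_0(1,n_1,n_2,n_3)=n_1+n_2+n_3-2.$$
   Context: For integers $n_1\ge\dots\ge n_r$, let $X_\ell=[n_\ell]$. An $r$-partite $r$-graph is a family $\mathcal F\subseteq X_1\times\dots\times X_r$; its vertices are the pairs $(\ell,x)$ with $x\in X_\ell$, and an edge $A=(a_1,\dots,a_r)$ contains the vertex $(\ell,x)$ iff $a_\ell=x$. Two edges $A,B$ are disjoint if $A[\ell]\ne B[\ell]$ for all $\ell$. The matching number $\nu(\mathcal F)$ is the maximum number of pairwise disjoint edges of $\mathcal F$. A transversal is a set $T$ of vertices such that every edge of $\mathcal F$ contains a vertex of $T$; $\tau(\mathcal F)$ is the minimum size of a transversal. For integers $r\ge 3$ and $n_1\ge\dots\ge n_r>s\ge 1$, $m_0(s,n_1,\dots,n_r)$ denotes the maximum of $|\mathcal F|$ over all $\mathcal F\subseteq X_1\times\dots\times X_r$ with $\nu(\mathcal F)\le s<\tau(\mathcal F)$. *)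

theory Defs
  imports Main
begin

text \<open>An r-partite r-graph with part sizes ns = [n_1,...,n_r] (list index l = part l+1).
  Edges are lists a of length r with a!l in X_l = {1..ns!l}.\<close>

definition edges :: "nat list \<Rightarrow> nat list set" where
  "edges ns = {a. length a = length ns \<and> (\<forall>l<length ns. a ! l \<in> {1..ns ! l})}"

definition vertices :: "nat list \<Rightarrow> (nat \<times> nat) set" where
  "vertices ns = {(l, x). l < length ns \<and> x \<in> {1..ns ! l}}"

definition contains_vertex :: "nat list \<Rightarrow> nat \<times> nat \<Rightarrow> bool" where
  "contains_vertex A v = (fst v < length A \<and> A ! fst v = snd v)"

definition edges_disjoint :: "nat list \<Rightarrow> nat list \<Rightarrow> bool" where
  "edges_disjoint A B = (\<forall>l<length A. A ! l \<noteq> B ! l)"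

definition is_matching :: "nat list set \<Rightarrow> nat list set \<Rightarrow> bool" where
  "is_matching F M = (M \<subseteq> F \<and> (\<forall>A\<in>M. \<forall>B\<in>M. A \<noteq> B \<longrightarrow> edges_disjoint A B))"

definition matching_number :: "nat list set \<Rightarrow> nat" where
  "matching_number F = Max {card M | M. is_matching F M}"

definition is_transversal :: "nat list \<Rightarrow> nat list set \<Rightarrow> (nat \<times> nat) set \<Rightarrow> bool" where
  "is_transversal ns F T = (T \<subseteq> vertices ns \<and> (\<forall>A\<in>F. \<exists>v\<in>T. contains_vertex A v))"

definition transversal_number :: "nat list \<Rightarrow> nat list set \<Rightarrow> nat" where
  "transversal_number ns F = Min {card T | T. is_transversal ns F T}"

definition m0 :: "nat \<Rightarrow> nat list \<Rightarrow> nat" where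
  "m0 s ns = Max {card F | F. F \<subseteq> edges ns \<and> matching_number F \<le> s
                              \<and> s < transversal_number ns F}"

end

theory Submission
  imports Defs
begin
lemma all3: "(\<forall>m<(3::nat). P m) = (P 0 \<and> P 1 \<and> P 2)"
  by (auto simp: less_Suc_eq numeral_eq_Suc)
lemma eq3: "length B = 3 \<Longrightarrow> length C = 3 \<Longrightarrow> B!0=C!0 \<Longrightarrow> B!1=C!1 \<Longrightarrow> B!2=C!2 \<Longrightarrow> B=C"
  by (rule nth_equalityI) (auto simp: less_Suc_eq numeral_eq_Suc)
lemma finite_edges: "finite (edges ns)"
proof -
  have "edges ns \<subseteq> {a. set a \<subseteq> {0..sum_list ns} \<and> length a = length ns}"
    proof
    fix a assume "a \<in> edges ns"
    hence L: "length a = length ns" and R: "\<forall>l<length ns. a ! l \<in> {1..ns ! l}" by (auto simp: edges_def)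
    have "set a \<subseteq> {0..sum_list ns}"
    proof
      fix y assume "y \<in> set a"
      then obtain i where i: "i < length a" "y = a!i" by (auto simp: in_set_conv_nth)
      have "ns!i \<le> sum_list ns" using i L by (intro elem_le_sum_list) auto
      thus "y \<in> {0..sum_list ns}" using R i L by auto
    qed
    thus "a \<in> {a. set a \<subseteq> {0..sum_list ns} \<and> length a = length ns}" using L by auto
  qed
  moreover have "finite {a. set a \<subseteq> {0..sum_list ns} \<and> length a = length ns}"
    by (rule finite_lists_length_eq) simp
  ultimately show ?thesis by (rule finite_subset)
qed
lemma not_disj3: "length B = 3 \<Longrightarrow> (B!0 = C!0 \<or> B!1 = C!1 \<or> B!2 = C!2) \<Longrightarrow> \<not> edges_disjoint B C"
  unfolding edges_disjoint_def by (metis less_Suc_eq numeral_3_eq_3 numeral_2_eq_2 One_nat_def)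
lemma finite_vertices: "finite (vertices ns)"
proof -
  have "vertices ns \<subseteq> Sigma {..<length ns} (\<lambda>l. {1..ns!l})" by (auto simp: vertices_def)
  thus ?thesis by (rule finite_subset) auto
qed
lemma upper:
  assumes ns: "length ns = 3" and Fe: "F \<subseteq> edges ns"
  and inter: "\<forall>B\<in>F. \<forall>C\<in>F. B \<noteq> C \<longrightarrow> (\<exists>l<3. B!l = C!l)"
  and tau: "\<forall>l<3. \<forall>x. \<exists>B\<in>F. B!l \<noteq> x"
  and A: "A \<in> F"
  and ge2: "\<forall>l<3. ns!l \<ge> 2"
  shows "card F + 2 \<le> ns!0 + ns!1 + ns!2"
proof -
  have len: "length B = 3" if "B \<in> F" for B using that Fe ns by (auto simp: edges_def)
  have rng: "B!l \<in> {1..ns!l}" if "B \<in> F" "l < 3" for B l using that Fe ns by (auto simp: edges_def)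
  have finF: "finite F" using Fe finite_edges finite_subset by blast
  define S where "S l = {B\<in>F. \<forall>m<3. (B!m \<noteq> A!m) = (m = l)}" for l :: nat
  define T where "T l = {B\<in>F. \<forall>m<3. (B!m = A!m) = (m = l)}" for l :: nat
  have TD: "(B!m = A!m) = (m = l)" if "B \<in> T l" "m < 3" for B m l using that unfolding T_def by auto
  have SD: "(B!m \<noteq> A!m) = (m = l)" if "B \<in> S l" "m < 3" for B m l using that unfolding S_def by auto
  have finS: "finite (S l)" for l using finF by (auto simp: S_def)
  have finT: "finite (T l)" for l using finF by (auto simp: T_def)
  have cover: "F \<subseteq> {A} \<union> S 0 \<union> S 1 \<union> S 2 \<union> T 0 \<union> T 1 \<union> T 2"
  proof
    fix B assume B: "B \<in> F"
    show "B \<in> {A} \<union> S 0 \<union> S 1 \<union> S 2 \<union> T 0 \<union> T 1 \<union> T 2"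
    proof (cases "B = A")
      case True thus ?thesis by auto
    next
      case False
      have nall: "\<not> (B!0 = A!0 \<and> B!1 = A!1 \<and> B!2 = A!2)" using False eq3 len B A by blast
      have "\<exists>l<3. B!l = A!l" using inter B A False by blast
      hence some: "B!0 = A!0 \<or> B!1 = A!1 \<or> B!2 = A!2" by (auto simp: less_Suc_eq numeral_eq_Suc)
      show ?thesis using nall some B unfolding S_def T_def all3 by auto
    qed
  qed
  have G1: "card (S l) \<le> ns!l - 1" if l: "l < 3" for l
  proof -
    have "inj_on (\<lambda>B. B!l) (S l)"
    proof (rule inj_onI)
      fix B C assume B: "B \<in> S l" and C: "C \<in> S l" and eq: "B!l = C!l"
      have "\<forall>m<3. B!m = C!m"
      proof (intro allI impI)
        fix m :: nat assume "m < 3"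
        thus "B!m = C!m" using SD[OF B \<open>m<3\<close>] SD[OF C \<open>m<3\<close>] eq by (cases "m = l") auto
      qed
      thus "B = C" using B C len eq3 unfolding S_def all3 by auto
    qed
    moreover have "(\<lambda>B. B!l) ` S l \<subseteq> {1..ns!l} - {A!l}"
      using rng l by (auto simp: S_def)
    ultimately have "card (S l) \<le> card ({1..ns!l} - {A!l})"
      by (intro card_inj_on_le) auto
    also have "\<dots> = ns!l - 1" using rng[OF A l] by simp
    finally show ?thesis .
  qed
  have G2: "S i = {}" if h2: "i < 3" "T i \<noteq> {}" for i
  proof (rule ccontr)
    assume "S i \<noteq> {}"
    then obtain C where C: "C \<in> S i" by auto
    obtain B where B: "B \<in> T i" using h2 by auto
    have "B \<noteq> C" using B C h2 unfolding S_def T_def by auto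
    then obtain m where m: "m < 3" "B!m = C!m" using inter B C unfolding S_def T_def by blast
    have b: "(B!m = A!m) = (m = i)" using B m(1) unfolding T_def by auto
    have c: "(C!m \<noteq> A!m) = (m = i)" using C m(1) unfolding S_def by auto
    show False using m(2) b c by auto
  qed
  have G3: "card (T i) \<le> ns!j - 1" if d: "i < 3" "j < 3" "k < 3" "i \<noteq> j" "i \<noteq> k" "j \<noteq> k"
     and ne: "T i \<noteq> {}" "T j \<noteq> {}" for i j k
  proof -
    obtain C where C: "C \<in> T j" using ne by auto
    have kk: "B!k = C!k" if B: "B \<in> T i" for B
    proof -
      have "B \<noteq> C" using TD[OF B d(2)] TD[OF C d(2)] d by auto
      then obtain m where m: "m < 3" "B!m = C!m" using inter B C unfolding T_def by blast
      have "m \<noteq> i" using TD[OF B m(1)] TD[OF C m(1)] m d by auto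
      moreover have "m \<noteq> j" using TD[OF B m(1)] TD[OF C m(1)] m d by auto
      ultimately have "m = k" using m d by auto
      thus ?thesis using m by simp
    qed
    have "inj_on (\<lambda>B. B!j) (T i)"
    proof (rule inj_onI)
      fix B B' assume B: "B \<in> T i" and B': "B' \<in> T i" and eq: "B!j = B'!j"
      have "\<forall>m<3. B!m = B'!m"
      proof (intro allI impI)
        fix m :: nat assume m: "m < 3"
        have "m = i \<or> m = j \<or> m = k" using m d by auto
        thus "B!m = B'!m" using TD[OF B m] TD[OF B' m] eq kk[OF B] kk[OF B'] d by auto
      qed
      thus "B = B'" using B B' len eq3 unfolding T_def all3 by auto
    qed
    moreover have "(\<lambda>B. B!j) ` T i \<subseteq> {1..ns!j} - {A!j}"
      using rng d by (auto simp: T_def)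
    ultimately have "card (T i) \<le> card ({1..ns!j} - {A!j})"
      by (intro card_inj_on_le) auto
    also have "\<dots> = ns!j - 1" using rng[OF A d(2)] by simp
    finally show ?thesis .
  qed
  have G4: "card (T i) \<le> 1" if d: "i < 3" "j < 3" "k < 3" "i \<noteq> j" "i \<noteq> k" "j \<noteq> k"
     and ne: "T j \<noteq> {}" "T k \<noteq> {}" for i j k
  proof -
    obtain C where C: "C \<in> T j" using ne by auto
    obtain D where D: "D \<in> T k" using ne by auto
    have kk: "B!k = C!k \<and> B!j = D!j" if B: "B \<in> T i" for B
    proof
      have "B \<noteq> C" using TD[OF B d(2)] TD[OF C d(2)] d by auto
      then obtain m where m: "m < 3" "B!m = C!m" using inter B C unfolding T_def by blast
      have "m \<noteq> i" using TD[OF B m(1)] TD[OF C m(1)] m d by auto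
      moreover have "m \<noteq> j" using TD[OF B m(1)] TD[OF C m(1)] m d by auto
      ultimately have "m = k" using m d by auto
      thus "B!k = C!k" using m by simp
    next
      have "B \<noteq> D" using TD[OF B d(3)] TD[OF D d(3)] d by auto
      then obtain m where m: "m < 3" "B!m = D!m" using inter B D unfolding T_def by blast
      have "m \<noteq> i" using TD[OF B m(1)] TD[OF D m(1)] m d by auto
      moreover have "m \<noteq> k" using TD[OF B m(1)] TD[OF D m(1)] m d by auto
      ultimately have "m = j" using m d by auto
      thus "B!j = D!j" using m by simp
    qed
    have "\<forall>B\<in>T i. \<forall>B'\<in>T i. B = B'"
    proof (intro ballI)
      fix B B' assume B: "B \<in> T i" and B': "B' \<in> T i"
      have "\<forall>m<3. B!m = B'!m"
      proof (intro allI impI)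
        fix m :: nat assume m: "m < 3"
        have "m = i \<or> m = j \<or> m = k" using m d by auto
        thus "B!m = B'!m" using TD[OF B m] TD[OF B' m] kk[OF B] kk[OF B'] d by auto
      qed
      thus "B = B'" using B B' len eq3 unfolding T_def all3 by auto
    qed
    thus ?thesis using finT[of i] by (simp add: card_le_Suc0_iff_eq)
  qed
  have G5: False if d: "i < 3" "j < 3" "k < 3" "i \<noteq> j" "i \<noteq> k" "j \<noteq> k"
     and e: "T j = {}" "T k = {}" "S i = {}" for i j k
  proof -
    obtain B where B: "B \<in> F" "B!i \<noteq> A!i" using tau d by blast
    have "B \<in> {A} \<union> S 0 \<union> S 1 \<union> S 2 \<union> T 0 \<union> T 1 \<union> T 2" using cover B by auto
    hence "B \<in> S j \<or> B \<in> S k \<or> B \<in> S i \<or> B \<in> T i \<or> B \<in> T j \<or> B \<in> T k \<or> B = A"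
      using d by (auto simp: less_Suc_eq numeral_eq_Suc)
    thus False using B d e unfolding S_def T_def by auto
  qed
  have "card F \<le> card ({A} \<union> S 0 \<union> S 1 \<union> S 2 \<union> T 0 \<union> T 1 \<union> T 2)"
    using cover finS finT by (intro card_mono) auto
  also have "\<dots> \<le> 1 + card (S 0) + card (S 1) + card (S 2) + card (T 0) + card (T 1) + card (T 2)"
    by (rule order_trans[OF card_Un_le] add_mono order_refl | simp)+
  finally have cF: "card F \<le> 1 + card (S 0) + card (S 1) + card (S 2) + card (T 0) + card (T 1) + card (T 2)" .
  have n0: "ns!0 \<ge> 2" and n1: "ns!1 \<ge> 2" and n2: "ns!2 \<ge> 2" using ge2 by auto
  have s0: "card (S 0) \<le> ns!0 - 1" and s1: "card (S 1) \<le> ns!1 - 1" and s2: "card (S 2) \<le> ns!2 - 1"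
    using G1 by auto
  show ?thesis
  proof (cases "T 0 = {}"; cases "T 1 = {}"; cases "T 2 = {}")
    assume "T 0 = {}" "T 1 = {}" "T 2 = {}"
    thus ?thesis using cF s0 s1 s2 n0 n1 n2 by simp
  next
    assume "T 0 = {}" "T 1 = {}" "T 2 \<noteq> {}"
    thus ?thesis using G5[of 2 0 1] G2[of 2] by simp
  next
    assume "T 0 = {}" "T 1 \<noteq> {}" "T 2 = {}"
    thus ?thesis using G5[of 1 0 2] G2[of 1] by simp
  next
    assume a: "T 0 = {}" "T 1 \<noteq> {}" "T 2 \<noteq> {}"
    have "S 1 = {}" "S 2 = {}" using G2 a by auto
    moreover have "card (T 1) \<le> ns!2 - 1" using G3[of 1 2 0] a by simp
    moreover have "card (T 2) \<le> ns!1 - 1" using G3[of 2 1 0] a by simp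
    ultimately show ?thesis using a cF s0 n0 n1 n2 by simp
  next
    assume "T 0 \<noteq> {}" "T 1 = {}" "T 2 = {}"
    thus ?thesis using G5[of 0 1 2] G2[of 0] by simp
  next
    assume a: "T 0 \<noteq> {}" "T 1 = {}" "T 2 \<noteq> {}"
    have "S 0 = {}" "S 2 = {}" using G2 a by auto
    moreover have "card (T 0) \<le> ns!2 - 1" using G3[of 0 2 1] a by simp
    moreover have "card (T 2) \<le> ns!0 - 1" using G3[of 2 0 1] a by simp
    ultimately show ?thesis using a cF s1 n0 n1 n2 by simp
  next
    assume a: "T 0 \<noteq> {}" "T 1 \<noteq> {}" "T 2 = {}"
    have "S 0 = {}" "S 1 = {}" using G2 a by auto
    moreover have "card (T 0) \<le> ns!1 - 1" using G3[of 0 1 2] a by simp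
    moreover have "card (T 1) \<le> ns!0 - 1" using G3[of 1 0 2] a by simp
    ultimately show ?thesis using a cF s2 n0 n1 n2 by simp
  next
    assume a: "T 0 \<noteq> {}" "T 1 \<noteq> {}" "T 2 \<noteq> {}"
    have "S 0 = {}" "S 1 = {}" "S 2 = {}" using G2 a by auto
    moreover have "card (T 0) \<le> 1" using G4[of 0 1 2] a by simp
    moreover have "card (T 1) \<le> 1" using G4[of 1 0 2] a by simp
    moreover have "card (T 2) \<le> 1" using G4[of 2 0 1] a by simp
    ultimately show ?thesis using a cF n0 n1 n2 by simp
  qed
qed


theorem theorem1p3:
  fixes n1 n2 n3 :: nat
  assumes "n1 \<ge> n2" and "n2 \<ge> n3" and "n3 \<ge> 2"
  shows "m0 1 [n1, n2, n3] = n1 + n2 + n3 - 2"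
proof -
  define ns where "ns = [n1, n2, n3]"
  have ns3: "length ns = 3" by (simp add: ns_def)
  have ge2: "\<forall>l<3. ns!l \<ge> 2" using assms by (auto simp: ns_def less_Suc_eq numeral_eq_Suc)
  define P where "P F \<longleftrightarrow> F \<subseteq> edges ns \<and> matching_number F \<le> 1 \<and> 1 < transversal_number ns F" for F
  have m0eq: "m0 1 ns = Max {card F | F. P F}" unfolding m0_def P_def by simp
  have ub: "card F \<le> n1 + n2 + n3 - 2" if PF: "P F" for F
  proof -
    have Fe: "F \<subseteq> edges ns" using PF by (simp add: P_def)
    have finF: "finite F" using Fe finite_edges finite_subset by blast
    have len: "length B = 3" if "B \<in> F" for B using that Fe ns3 by (auto simp: edges_def)
    have finM: "finite {card M | M. is_matching F M}"
    proof -
      have "{card M | M. is_matching F M} \<subseteq> card ` Pow F" by (auto simp: is_matching_def)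
      thus ?thesis using finF by (meson finite_Pow_iff finite_imageI finite_subset)
    qed
    have inter: "\<forall>B\<in>F. \<forall>C\<in>F. B \<noteq> C \<longrightarrow> (\<exists>l<3. B!l = C!l)"
    proof (intro ballI impI)
      fix B C assume B: "B \<in> F" and C: "C \<in> F" and ne: "B \<noteq> C"
      show "\<exists>l<3. B!l = C!l"
      proof (rule ccontr)
        assume "\<not> (\<exists>l<3. B!l = C!l)"
        hence d: "edges_disjoint B C" "edges_disjoint C B" using len[OF B] len[OF C]
          by (auto simp: edges_disjoint_def)
        have "is_matching F {B, C}" using B C d ne by (auto simp: is_matching_def)
        hence "card {B, C} \<le> matching_number F" unfolding matching_number_def
          using finM by (intro Max_ge) auto
        thus False using ne PF by (simp add: P_def)
      qed
    qed
    have finTr: "finite {card T | T. is_transversal ns F T}"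
    proof -
      have "{card T | T. is_transversal ns F T} \<subseteq> card ` Pow (vertices ns)" by (auto simp: is_transversal_def)
      thus ?thesis using finite_vertices by (meson finite_Pow_iff finite_imageI finite_subset)
    qed
    have tn: "1 < transversal_number ns F" using PF by (simp add: P_def)
    have "F \<noteq> {}"
    proof
      assume "F = {}"
      hence "is_transversal ns F {}" by (simp add: is_transversal_def)
      hence "card ({}::(nat\<times>nat) set) \<in> {card T | T. is_transversal ns F T}" by blast
      hence "transversal_number ns F \<le> card ({}::(nat\<times>nat) set)" unfolding transversal_number_def
        using finTr by (intro Min_le)
      thus False using tn by simp
    qed
    then obtain A where A: "A \<in> F" by auto
    have tau: "\<forall>l<3. \<forall>x. \<exists>B\<in>F. B!l \<noteq> x"
    proof (intro allI impI)
      fix l x assume l: "l < (3::nat)"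
      show "\<exists>B\<in>F. B!l \<noteq> x"
      proof (rule ccontr)
        assume "\<not> (\<exists>B\<in>F. B!l \<noteq> x)"
        hence all: "\<forall>B\<in>F. B!l = x" by auto
        have Ax: "A!l = x" using A all by auto
        have "A \<in> edges ns" using A Fe by auto
        hence "(l, A!l) \<in> vertices ns" using l ns3 by (auto simp: vertices_def edges_def)
        hence "(l, x) \<in> vertices ns" using Ax by simp
        hence "is_transversal ns F {(l, x)}" using all l len
          by (auto simp: is_transversal_def contains_vertex_def)
        hence "card {(l, x)} \<in> {card T | T. is_transversal ns F T}" by blast
        hence "transversal_number ns F \<le> card {(l, x)}" unfolding transversal_number_def
          using finTr by (intro Min_le)
        thus False using tn by simp
      qed
    qed
    have "card F + 2 \<le> ns!0 + ns!1 + ns!2" by (rule upper[OF ns3 Fe inter tau A ge2])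
    thus ?thesis by (simp add: ns_def)
  qed
  define F0 where "F0 = (\<lambda>x. [1,1,x]) ` {1..n3} \<union> (\<lambda>y. [1,y,1]) ` {2..n2} \<union> (\<lambda>z. [z,1,1]) ` {2..n1}"
  have finF0: "finite F0" by (simp add: F0_def)
  have cardF0: "card F0 = n1 + n2 + n3 - 2"
  proof -
    have c1: "card ((\<lambda>x. [1::nat,1,x]) ` {1..n3}) = n3" by (subst card_image) (auto simp: inj_on_def)
    have c2: "card ((\<lambda>y. [1::nat,y,1]) ` {2..n2}) = n2 - 1" by (subst card_image) (auto simp: inj_on_def)
    have c3: "card ((\<lambda>z. [z::nat,1,1]) ` {2..n1}) = n1 - 1" by (subst card_image) (auto simp: inj_on_def)
    have "card F0 = card ((\<lambda>x. [1::nat,1,x]) ` {1..n3} \<union> (\<lambda>y. [1,y,1]) ` {2..n2}) + card ((\<lambda>z. [z,1,1]) ` {2..n1})"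
      unfolding F0_def by (rule card_Un_disjoint) auto
    also have "card ((\<lambda>x. [1::nat,1,x]) ` {1..n3} \<union> (\<lambda>y. [1,y,1]) ` {2..n2}) = n3 + (n2 - 1)"
      using c1 c2 by (subst card_Un_disjoint) auto
    finally show ?thesis using c3 assms by simp
  qed
  have F0e: "F0 \<subseteq> edges ns" using assms
    by (auto simp: F0_def edges_def ns_def less_Suc_eq numeral_eq_Suc)
  have F0int: "\<not> edges_disjoint B C" if "B \<in> F0" "C \<in> F0" for B C
    using that by (intro not_disj3) (auto simp: F0_def)
  have mF0: "matching_number F0 \<le> 1"
  proof -
    have "finite {card M | M. is_matching F0 M}"
    proof -
      have "{card M | M. is_matching F0 M} \<subseteq> card ` Pow F0" by (auto simp: is_matching_def)
      thus ?thesis using finF0 by (meson finite_Pow_iff finite_imageI finite_subset)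
    qed
    moreover have "is_matching F0 {}" by (simp add: is_matching_def)
    moreover have "card M \<le> 1" if "is_matching F0 M" for M
    proof -
      have "M \<subseteq> F0" using that by (simp add: is_matching_def)
      hence fM: "finite M" using finF0 finite_subset by blast
      have "\<forall>a\<in>M. \<forall>b\<in>M. a = b" using that F0int unfolding is_matching_def by blast
      thus ?thesis using fM by (simp add: card_le_Suc0_iff_eq)
    qed
    ultimately show ?thesis unfolding matching_number_def by (intro Max.boundedI) auto
  qed
  have tF0: "1 < transversal_number ns F0"
  proof -
    have finTr: "finite {card T | T. is_transversal ns F0 T}"
    proof -
      have "{card T | T. is_transversal ns F0 T} \<subseteq> card ` Pow (vertices ns)" by (auto simp: is_transversal_def)
      thus ?thesis using finite_vertices by (meson finite_Pow_iff finite_imageI finite_subset)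
    qed
    have "is_transversal ns F0 (vertices ns)"
      using F0e by (auto simp: is_transversal_def vertices_def contains_vertex_def edges_def ns_def F0_def)
    moreover have "1 < card T" if T: "is_transversal ns F0 T" for T
    proof (rule ccontr)
      assume "\<not> 1 < card T"
      hence c: "card T \<le> 1" by simp
      have fT: "finite T" using T finite_vertices finite_subset by (auto simp: is_transversal_def)
      have "[1,1,1] \<in> F0" using assms by (auto simp: F0_def)
      then obtain v where v: "v \<in> T" using T by (auto simp: is_transversal_def)
      hence "T = {v}" using c fT by (metis card_le_Suc0_iff_eq One_nat_def singletonD singletonI subsetI subset_antisym)
      hence all: "\<forall>B\<in>F0. contains_vertex B v" using T by (auto simp: is_transversal_def)
      obtain l x where lx: "v = (l, x)" by force
      have l3: "l < 3" using v lx T by (auto simp: is_transversal_def vertices_def ns_def)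
      have "[1,1,1] \<in> F0" "[2,1,1] \<in> F0" "[1,2,1] \<in> F0" "[1,1,2] \<in> F0" using assms
        by (auto simp: F0_def image_iff)
      hence "contains_vertex [1,1,1] v" "contains_vertex [2,1,1] v" "contains_vertex [1,2,1] v"
          "contains_vertex [1,1,2] v" using all by auto
      thus False using l3 lx by (auto simp: contains_vertex_def less_Suc_eq numeral_eq_Suc)
    qed
    ultimately show ?thesis unfolding transversal_number_def using finTr
      by (subst Min_gr_iff) auto
  qed
  have PF0: "P F0" using F0e mF0 tF0 by (simp add: P_def)
  have fin: "finite {card F | F. P F}"
  proof -
    have "{card F | F. P F} \<subseteq> card ` Pow (edges ns)" by (auto simp: P_def)
    thus ?thesis using finite_edges by (meson finite_Pow_iff finite_imageI finite_subset)
  qed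
  have "Max {card F | F. P F} = n1 + n2 + n3 - 2"
    by (rule Max_eqI[OF fin]) (use ub PF0 cardF0 in \<open>auto, metis\<close>)
  thus ?thesis using m0eq ns_def by simp
qed
end
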